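(* Let $m,n,r$ be positive integers with $r\le n$, and let $S:M_r\to M_n$ be the linear map $$S(a)=\begin{pmatrix} a&0\\0&0\end{pmatrix}\in M_n,\qquad a\in M_r,$$ which places an $r\times r$ matrix in the upper-left corner of an $n\times n$ zero matrix. If a positive linear map $\phi:M_m\to M_r$ generates an exposed ray of the convex cone $\mathbb P_1[M_m,M_r]$, then $S\circ\phi:M_m\to M_n$ generates an exposed ray of the convex cone $\mathbb P_1[M_m,M_n]$.
   Context: $M_k$ denotes the algebra of $k\times k$ complex matrices. A linear map $\phi:M_m\to M_n$ is positive if it sends positive semidefinite matrices to positive semidefinite matrices; $\mathbb P_1[M_m,M_n]$ denotes the convex cone of all positive linear maps $M_m\to M_n$, regarded as a cone in the real vector space of Hermiticity-preserving linear maps $M_m\to M_n$. A nonzero $\phi$ in the cone generates an exposed ray if there is a real linear functional $f$ on that real vector space with $f\ge 0$ on the cone such that $\{\psi\in\mathbb P_1[M_m,M_n]: f(\psi)=0\}=\{\lambda\phi:\lambda\ge 0\}$. *)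

theory Defs
  imports Complex_Main "Jordan_Normal_Form.Matrix"
begin

text \<open>A map M_m -> M_n is a function on complex mat; to make equality of maps meaningful,
  maps are required to be extensional: zero_mat n n outside carrier_mat m m.\<close>

definition cadj :: "complex mat \<Rightarrow> complex mat" where
  "cadj A = mat (dim_col A) (dim_row A) (\<lambda>(i,j). cnj (A $$ (j,i)))"

definition hermitian_mat :: "complex mat \<Rightarrow> bool" where
  "hermitian_mat A \<longleftrightarrow> cadj A = A"

definition psd :: "nat \<Rightarrow> complex mat \<Rightarrow> bool" where
  "psd k A \<longleftrightarrow> A \<in> carrier_mat k k \<and> hermitian_mat A \<and>
     (\<forall>v \<in> carrier_vec k.
        (\<Sum>i<k. \<Sum>j<k. cnj (v $ i) * A $$ (i,j) * v $ j) \<in> \<real> \<and>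
        Re (\<Sum>i<k. \<Sum>j<k. cnj (v $ i) * A $$ (i,j) * v $ j) \<ge> 0)"

definition lin_map :: "nat \<Rightarrow> nat \<Rightarrow> (complex mat \<Rightarrow> complex mat) \<Rightarrow> bool" where
  "lin_map m n \<phi> \<longleftrightarrow>
     (\<forall>A \<in> carrier_mat m m. \<phi> A \<in> carrier_mat n n) \<and>
     (\<forall>A \<in> carrier_mat m m. \<forall>B \<in> carrier_mat m m. \<phi> (A + B) = \<phi> A + \<phi> B) \<and>
     (\<forall>A \<in> carrier_mat m m. \<forall>c::complex. \<phi> (c \<cdot>\<^sub>m A) = c \<cdot>\<^sub>m \<phi> A) \<and>
     (\<forall>A. A \<notin> carrier_mat m m \<longrightarrow> \<phi> A = 0\<^sub>m n n)"

definition HP :: "nat \<Rightarrow> nat \<Rightarrow> (complex mat \<Rightarrow> complex mat) set" where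
  "HP m n = {\<phi>. lin_map m n \<phi> \<and> (\<forall>A \<in> carrier_mat m m. \<phi> (cadj A) = cadj (\<phi> A))}"

definition P1 :: "nat \<Rightarrow> nat \<Rightarrow> (complex mat \<Rightarrow> complex mat) set" where
  "P1 m n = {\<phi>. lin_map m n \<phi> \<and> (\<forall>A. psd m A \<longrightarrow> psd n (\<phi> A))}"

definition map_comb :: "real \<Rightarrow> (complex mat \<Rightarrow> complex mat) \<Rightarrow> real \<Rightarrow> (complex mat \<Rightarrow> complex mat)
    \<Rightarrow> (complex mat \<Rightarrow> complex mat)" where
  "map_comb a \<phi> b \<psi> = (\<lambda>A. complex_of_real a \<cdot>\<^sub>m \<phi> A + complex_of_real b \<cdot>\<^sub>m \<psi> A)"

definition real_lin_functional :: "nat \<Rightarrow> nat \<Rightarrow> ((complex mat \<Rightarrow> complex mat) \<Rightarrow> real) \<Rightarrow> bool" where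
  "real_lin_functional m n f \<longleftrightarrow>
     (\<forall>\<phi> \<in> HP m n. \<forall>\<psi> \<in> HP m n. \<forall>a b :: real.
        f (map_comb a \<phi> b \<psi>) = a * f \<phi> + b * f \<psi>)"

definition exposed_ray :: "nat \<Rightarrow> nat \<Rightarrow> (complex mat \<Rightarrow> complex mat) \<Rightarrow> bool" where
  "exposed_ray m n \<phi> \<longleftrightarrow> \<phi> \<in> P1 m n \<and> \<phi> \<noteq> (\<lambda>A. 0\<^sub>m n n) \<and>
     (\<exists>f. real_lin_functional m n f \<and> (\<forall>\<psi> \<in> P1 m n. f \<psi> \<ge> 0) \<and>
        {\<psi> \<in> P1 m n. f \<psi> = 0} = {(\<lambda>A. complex_of_real l \<cdot>\<^sub>m \<phi> A) | l. l \<ge> 0})"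

definition corner :: "nat \<Rightarrow> nat \<Rightarrow> complex mat \<Rightarrow> complex mat" where
  "corner r n a = mat n n (\<lambda>(i,j). if i < r \<and> j < r then a $$ (i,j) else 0)"

end

theory Submission
  imports Defs
begin

lemma psd_qf: "psd n B \<Longrightarrow> v \<in> carrier_vec n \<Longrightarrow>
   (\<Sum>i<n. \<Sum>j<n. cnj (v $ i) * B $$ (i,j) * v $ j) \<in> \<real> \<and> Re (\<Sum>i<n. \<Sum>j<n. cnj (v $ i) * B $$ (i,j) * v $ j) \<ge> 0"
  unfolding psd_def by blast

lemma psd_intro: "B \<in> carrier_mat n n \<Longrightarrow> hermitian_mat B \<Longrightarrow>
   (\<And>v. v \<in> carrier_vec n \<Longrightarrow> (\<Sum>i<n. \<Sum>j<n. cnj (v $ i) * B $$ (i,j) * v $ j) \<in> \<real> \<and> Re (\<Sum>i<n. \<Sum>j<n. cnj (v $ i) * B $$ (i,j) * v $ j) \<ge> 0)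
   \<Longrightarrow> psd n B"
  unfolding psd_def by blast


lemma sum2:
  fixes n :: nat
  assumes "i < n" "j < n" "i \<noteq> j"
  shows "(\<Sum>b<n. h b * (if b = i then x else if b = j then y else (0::complex))) = h i * x + h j * y"
proof -
  have "(\<Sum>b<n. h b * (if b = i then x else if b = j then y else (0::complex)))
     = (\<Sum>b<n. (if b = i then h b * x else 0) + (if b = j then h b * y else 0))"
    by (rule sum.cong) (use assms in auto)
  also have "\<dots> = (\<Sum>b<n. (if b = i then h b * x else 0)) + (\<Sum>b<n. (if b = j then h b * y else 0))"
    by (rule sum.distrib)
  also have "\<dots> = h i * x + h j * y" using assms by (simp only: sum.delta finite_lessThan lessThan_iff if_True)
  finally show ?thesis .
qed

lemma sum2':
  fixes n :: nat
  assumes "i < n" "j < n" "i \<noteq> j"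
  shows "(\<Sum>b<n. (if b = i then x else if b = j then y else (0::complex)) * h b) = x * h i + y * h j"
  using sum2[OF assms, of h x y] by (simp add: mult.commute)

lemma qf2:
  assumes B: "B \<in> carrier_mat n n" and ij: "i < n" "j < n" "i \<noteq> j"
  shows "(\<Sum>a<n. \<Sum>b<n. cnj (vec n (\<lambda>a. if a = i then x else if a = j then y else 0) $ a) * B $$ (a,b)
            * vec n (\<lambda>a. if a = i then x else if a = j then y else 0) $ b)
       = cnj x * B $$ (i,i) * x + cnj x * B $$ (i,j) * y + cnj y * B $$ (j,i) * x + cnj y * B $$ (j,j) * y"
proof -
  let ?v = "vec n (\<lambda>a. if a = i then x else if a = j then y else 0)"
  have inner: "(\<Sum>b<n. cnj (?v $ a) * B $$ (a,b) * ?v $ b) = cnj (?v $ a) * B $$ (a,i) * x + cnj (?v $ a) * B $$ (a,j) * y"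
    if "a < n" for a
  proof -
    have "(\<Sum>b<n. cnj (?v $ a) * B $$ (a,b) * ?v $ b) = (\<Sum>b<n. (cnj (?v $ a) * B $$ (a,b)) * (if b = i then x else if b = j then y else 0))"
      by (rule sum.cong) auto
    also have "\<dots> = cnj (?v $ a) * B $$ (a,i) * x + cnj (?v $ a) * B $$ (a,j) * y"
      by (rule sum2[OF ij])
    finally show ?thesis .
  qed
  have cv: "cnj (?v $ a) = (if a = i then cnj x else if a = j then cnj y else 0)" if "a < n" for a
    using that by simp
  have inner': "(\<Sum>b<n. cnj (?v $ a) * B $$ (a,b) * ?v $ b) = (if a = i then cnj x else if a = j then cnj y else 0) * (B $$ (a,i) * x + B $$ (a,j) * y)"
    if "a < n" for a
    unfolding inner[OF that] by (simp only: cv[OF that] distrib_left mult.assoc)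
  have "(\<Sum>a<n. \<Sum>b<n. cnj (?v $ a) * B $$ (a,b) * ?v $ b)
      = (\<Sum>a<n. (if a = i then cnj x else if a = j then cnj y else 0) * (B $$ (a,i) * x + B $$ (a,j) * y))"
    by (rule sum.cong[OF refl]) (simp only: inner' lessThan_iff)
  also have "\<dots> = cnj x * (B $$ (i,i) * x + B $$ (i,j) * y) + cnj y * (B $$ (j,i) * x + B $$ (j,j) * y)"
    by (rule sum2'[OF ij])
  finally show ?thesis by (simp add: algebra_simps)
qed

lemma qf1:
  assumes B: "B \<in> carrier_mat n n" and i: "i < n"
  shows "(\<Sum>a<n. \<Sum>b<n. cnj (vec n (\<lambda>a. if a = i then 1 else 0) $ a) * B $$ (a,b)
            * vec n (\<lambda>a. if a = i then 1 else 0) $ b) = B $$ (i,i)"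
proof -
  have "(\<Sum>a<n. \<Sum>b<n. cnj (vec n (\<lambda>a. if a = i then 1 else 0) $ a) * B $$ (a,b)
            * vec n (\<lambda>a. if a = i then 1 else (0::complex)) $ b) = (\<Sum>a<n. if a = i then B $$ (a,i) else 0)"
    by (rule sum.cong) (auto simp: if_distrib cong: if_cong)
  also have "\<dots> = B $$ (i,i)" using i by simp
  finally show ?thesis .
qed

lemma psd_herm: assumes "psd n B" "i < n" "j < n" shows "B $$ (j,i) = cnj (B $$ (i,j))"
proof -
  have "cadj B = B" "B \<in> carrier_mat n n" using assms by (auto simp: psd_def hermitian_mat_def)
  then have "B $$ (j,i) = cadj B $$ (j,i)" by simp
  also have "\<dots> = cnj (B $$ (i,j))" using assms \<open>B \<in> carrier_mat n n\<close> by (auto simp: cadj_def)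
  finally show ?thesis .
qed

lemma psd_diag: assumes "psd n B" "i < n" shows "B $$ (i,i) \<in> \<real>" "Re (B $$ (i,i)) \<ge> 0"
proof -
  have B: "B \<in> carrier_mat n n" using assms by (auto simp: psd_def)
  have vin: "vec n (\<lambda>a. if a = i then 1 else 0) \<in> carrier_vec n" by simp
  show "B $$ (i,i) \<in> \<real>" "Re (B $$ (i,i)) \<ge> 0"
    using psd_qf[OF assms(1) vin, unfolded qf1[OF B assms(2)]] by blast+
qed

lemma psd_zero_row: assumes P: "psd n B" and ij: "i < n" "j < n" and z: "B $$ (i,i) = 0"
  shows "B $$ (i,j) = 0"
proof (rule ccontr)
  assume bnz: "B $$ (i,j) \<noteq> 0"
  then have ne: "i \<noteq> j" using z by auto
  have B: "B \<in> carrier_mat n n" using P by (auto simp: psd_def)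
  define b where "b = B $$ (i,j)"
  define c where "c = (Re (B $$ (j,j)) + 1) / (cmod b)^2"
  define x where "x = - (complex_of_real c) * b"
  have hj: "B $$ (j,i) = cnj b" using psd_herm[OF P ij] b_def by simp
  have vin: "vec n (\<lambda>a. if a = i then x else if a = j then 1 else 0) \<in> carrier_vec n" by simp
  have q: "Re (cnj x * B $$ (i,i) * x + cnj x * B $$ (i,j) * 1 + cnj 1 * B $$ (j,i) * x + cnj 1 * B $$ (j,j) * 1) \<ge> 0"
    using psd_qf[OF P vin, unfolded qf2[OF B ij ne, of x 1]] by blast
  have bb: "cnj b * b = complex_of_real ((cmod b)^2)" by (metis complex_norm_square mult.commute)
  have "cnj x * B $$ (i,i) * x + cnj x * B $$ (i,j) * 1 + cnj 1 * B $$ (j,i) * x + cnj 1 * B $$ (j,j) * 1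
      = - 2 * complex_of_real c * (cnj b * b) + B $$ (j,j)"
    by (simp add: z hj x_def b_def[symmetric] algebra_simps)
  also have "\<dots> = complex_of_real (- 2 * c * (cmod b)^2) + B $$ (j,j)" by (simp add: bb)
  finally have e: "cnj x * B $$ (i,i) * x + cnj x * B $$ (i,j) * 1 + cnj 1 * B $$ (j,i) * x + cnj 1 * B $$ (j,j) * 1
      = complex_of_real (- 2 * c * (cmod b)^2) + B $$ (j,j)" .
  have "Re (cnj x * B $$ (i,i) * x + cnj x * B $$ (i,j) * 1 + cnj 1 * B $$ (j,i) * x + cnj 1 * B $$ (j,j) * 1)
     = - 2 * c * (cmod b)^2 + Re (B $$ (j,j))" unfolding e by simp
  also have "\<dots> = - Re (B $$ (j,j)) - 2" using bnz b_def c_def by (simp add: field_simps)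
  also have "\<dots> < 0" using psd_diag(2)[OF P ij(2)] by simp
  finally show False using q by simp
qed


definition topleft :: "nat \<Rightarrow> complex mat \<Rightarrow> complex mat" where
  "topleft r B = mat r r (\<lambda>(i,j). B $$ (i,j))"

definition restr :: "nat \<Rightarrow> nat \<Rightarrow> (complex mat \<Rightarrow> complex mat) \<Rightarrow> complex mat \<Rightarrow> complex mat" where
  "restr m r \<psi> = (\<lambda>A. if A \<in> carrier_mat m m then topleft r (\<psi> A) else 0\<^sub>m r r)"

definition Qm :: "nat \<Rightarrow> nat \<Rightarrow> nat \<Rightarrow> complex \<Rightarrow> complex mat" where
  "Qm m k l t = mat m m (\<lambda>(i,j). ((if i = k then 1 else 0) + (if i = l then t else 0)) *
      cnj ((if j = k then 1 else 0) + (if j = l then t else 0)))"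

definition Eu :: "nat \<Rightarrow> nat \<Rightarrow> nat \<Rightarrow> complex mat" where
  "Eu m k l = mat m m (\<lambda>(i,j). if i = k \<and> j = l then 1 else 0)"

lemma qf_trunc:
  fixes f :: "nat \<Rightarrow> nat \<Rightarrow> complex"
  assumes "r \<le> n" and z: "\<And>i j. i < n \<Longrightarrow> j < n \<Longrightarrow> \<not> (i < r \<and> j < r) \<Longrightarrow> f i j = 0"
  shows "(\<Sum>i<n. \<Sum>j<n. f i j) = (\<Sum>i<r. \<Sum>j<r. f i j)"
proof -
  have sub: "{..<r} \<subseteq> {..<n}" using assms(1) by auto
  have "(\<Sum>i<n. \<Sum>j<n. f i j) = (\<Sum>i<r. \<Sum>j<n. f i j)"
    by (rule sum.mono_neutral_right) (use sub z in auto)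
  also have "\<dots> = (\<Sum>i<r. \<Sum>j<r. f i j)"
    by (rule sum.cong[OF refl], rule sum.mono_neutral_right) (use sub z assms(1) in auto)
  finally show ?thesis .
qed

lemma topleft_carrier[simp]: "topleft r B \<in> carrier_mat r r" by (simp add: topleft_def)
lemma topleft_index[simp]: "i < r \<Longrightarrow> j < r \<Longrightarrow> topleft r B $$ (i,j) = B $$ (i,j)" by (simp add: topleft_def)
lemma topleft_dims[simp]: "dim_row (topleft r B) = r" "dim_col (topleft r B) = r" by (simp_all add: topleft_def)
lemma corner_carrier[simp]: "corner r n B \<in> carrier_mat n n" by (simp add: corner_def)
lemma corner_dims[simp]: "dim_row (corner r n B) = n" "dim_col (corner r n B) = n" by (simp_all add: corner_def)
lemma corner_index[simp]: "i < n \<Longrightarrow> j < n \<Longrightarrow> corner r n B $$ (i,j) = (if i < r \<and> j < r then B $$ (i,j) else 0)"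
  by (simp add: corner_def)
lemma Qm_carrier[simp]: "Qm m k l t \<in> carrier_mat m m" by (simp add: Qm_def)

lemma topleft_add: "B \<in> carrier_mat n n \<Longrightarrow> C \<in> carrier_mat n n \<Longrightarrow> r \<le> n \<Longrightarrow>
   topleft r (B + C) = topleft r B + topleft r C"
  by (rule eq_matI) auto
lemma topleft_smult: "B \<in> carrier_mat n n \<Longrightarrow> r \<le> n \<Longrightarrow> topleft r (c \<cdot>\<^sub>m B) = c \<cdot>\<^sub>m topleft r B"
  by (rule eq_matI) auto
lemma topleft_cadj: "B \<in> carrier_mat n n \<Longrightarrow> r \<le> n \<Longrightarrow> topleft r (cadj B) = cadj (topleft r B)"
  by (rule eq_matI) (auto simp: cadj_def)
lemma topleft_corner: "B \<in> carrier_mat r r \<Longrightarrow> r \<le> n \<Longrightarrow> topleft r (corner r n B) = B"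
  by (rule eq_matI) auto
lemma corner_add: "B \<in> carrier_mat r r \<Longrightarrow> C \<in> carrier_mat r r \<Longrightarrow>
   corner r n (B + C) = corner r n B + corner r n C"
  by (rule eq_matI) auto
lemma corner_smult: "B \<in> carrier_mat r r \<Longrightarrow> corner r n (c \<cdot>\<^sub>m B) = c \<cdot>\<^sub>m corner r n B"
  by (rule eq_matI) auto
lemma corner_cadj: "B \<in> carrier_mat r r \<Longrightarrow> corner r n (cadj B) = cadj (corner r n B)"
  by (rule eq_matI) (auto simp: cadj_def)
lemma corner_zero: "corner r n (0\<^sub>m r r) = 0\<^sub>m n n"
  by (rule eq_matI) auto

lemma psd_topleft:
  assumes P: "psd n B" and rn: "r \<le> n"
  shows "psd r (topleft r B)"
proof (rule psd_intro)
  have B: "B \<in> carrier_mat n n" and h: "cadj B = B" using P by (auto simp: psd_def hermitian_mat_def)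
  show "topleft r B \<in> carrier_mat r r" by simp
  have "cadj (topleft r B) = topleft r (cadj B)" by (rule topleft_cadj[OF B rn, symmetric])
  then show "hermitian_mat (topleft r B)" unfolding hermitian_mat_def h .
  fix v :: "complex vec" assume v: "v \<in> carrier_vec r"
  define w where "w = vec n (\<lambda>i. if i < r then v $ i else 0)"
  have w: "w \<in> carrier_vec n" by (simp add: w_def)
  have "(\<Sum>i<n. \<Sum>j<n. cnj (w $ i) * B $$ (i,j) * w $ j) = (\<Sum>i<r. \<Sum>j<r. cnj (w $ i) * B $$ (i,j) * w $ j)"
    by (rule qf_trunc[OF rn]) (auto simp: w_def)
  also have "\<dots> = (\<Sum>i<r. \<Sum>j<r. cnj (v $ i) * topleft r B $$ (i,j) * v $ j)"
    using rn by (intro sum.cong refl) (simp add: w_def)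
  finally show "(\<Sum>i<r. \<Sum>j<r. cnj (v $ i) * topleft r B $$ (i,j) * v $ j) \<in> \<real> \<and>
        Re (\<Sum>i<r. \<Sum>j<r. cnj (v $ i) * topleft r B $$ (i,j) * v $ j) \<ge> 0"
    using psd_qf[OF P w] by simp
qed

lemma psd_corner:
  assumes P: "psd r B" and rn: "r \<le> n"
  shows "psd n (corner r n B)"
proof (rule psd_intro)
  have B: "B \<in> carrier_mat r r" and h: "cadj B = B" using P by (auto simp: psd_def hermitian_mat_def)
  show "corner r n B \<in> carrier_mat n n" by simp
  have "cadj (corner r n B) = corner r n (cadj B)" by (rule corner_cadj[OF B, symmetric])
  then show "hermitian_mat (corner r n B)" unfolding hermitian_mat_def h .
  fix v :: "complex vec" assume v: "v \<in> carrier_vec n"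
  define w where "w = vec r (\<lambda>i. v $ i)"
  have w: "w \<in> carrier_vec r" by (simp add: w_def)
  have "(\<Sum>i<n. \<Sum>j<n. cnj (v $ i) * corner r n B $$ (i,j) * v $ j) = (\<Sum>i<r. \<Sum>j<r. cnj (v $ i) * corner r n B $$ (i,j) * v $ j)"
    by (rule qf_trunc[OF rn]) auto
  also have "\<dots> = (\<Sum>i<r. \<Sum>j<r. cnj (w $ i) * B $$ (i,j) * w $ j)"
    using rn by (intro sum.cong refl) (simp add: w_def)
  finally show "(\<Sum>i<n. \<Sum>j<n. cnj (v $ i) * corner r n B $$ (i,j) * v $ j) \<in> \<real> \<and>
        Re (\<Sum>i<n. \<Sum>j<n. cnj (v $ i) * corner r n B $$ (i,j) * v $ j) \<ge> 0"
    using psd_qf[OF P w] by simp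
qed

lemma psd_smult:
  assumes P: "psd n B" and l: "l \<ge> 0"
  shows "psd n (complex_of_real l \<cdot>\<^sub>m B)"
proof -
  have B: "B \<in> carrier_mat n n" and h: "hermitian_mat B" using P by (auto simp: psd_def)
  have "hermitian_mat (complex_of_real l \<cdot>\<^sub>m B)"
    unfolding hermitian_mat_def
  proof (rule eq_matI)
    fix i j assume "i < dim_row (complex_of_real l \<cdot>\<^sub>m B)" "j < dim_col (complex_of_real l \<cdot>\<^sub>m B)"
    then have ij: "i < n" "j < n" using B by auto
    show "cadj (complex_of_real l \<cdot>\<^sub>m B) $$ (i, j) = (complex_of_real l \<cdot>\<^sub>m B) $$ (i, j)"
      using ij B psd_herm[OF P ij(2) ij(1)] by (simp add: cadj_def)
  qed (use B in \<open>auto simp: cadj_def\<close>)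
  moreover have "(\<Sum>i<n. \<Sum>j<n. cnj (v $ i) * (complex_of_real l \<cdot>\<^sub>m B) $$ (i,j) * v $ j) \<in> \<real> \<and>
        Re (\<Sum>i<n. \<Sum>j<n. cnj (v $ i) * (complex_of_real l \<cdot>\<^sub>m B) $$ (i,j) * v $ j) \<ge> 0" if v: "v \<in> carrier_vec n" for v
  proof -
    have "(\<Sum>i<n. \<Sum>j<n. cnj (v $ i) * (complex_of_real l \<cdot>\<^sub>m B) $$ (i,j) * v $ j)
       = complex_of_real l * (\<Sum>i<n. \<Sum>j<n. cnj (v $ i) * B $$ (i,j) * v $ j)"
      using B by (simp add: sum_distrib_left mult_ac)
    moreover have "(\<Sum>i<n. \<Sum>j<n. cnj (v $ i) * B $$ (i,j) * v $ j) \<in> \<real>"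
       "Re (\<Sum>i<n. \<Sum>j<n. cnj (v $ i) * B $$ (i,j) * v $ j) \<ge> 0"
      using psd_qf[OF P v] by blast+
    ultimately show ?thesis using l by simp
  qed
  ultimately show ?thesis using B by (simp add: psd_def)
qed

lemma Qm_dims[simp]: "dim_row (Qm m k l t) = m" "dim_col (Qm m k l t) = m" by (simp_all add: Qm_def)

lemma Qm_psd: assumes "k < m" "l < m" shows "psd m (Qm m k l t)"
proof -
  define w where "w = (\<lambda>i::nat. (if i = k then 1 else 0) + (if i = l then t else 0))"
  have Qe: "Qm m k l t $$ (i,j) = w i * cnj (w j)" if "i < m" "j < m" for i j
    using that by (simp add: Qm_def w_def)
  have "hermitian_mat (Qm m k l t)"
    unfolding hermitian_mat_def by (rule eq_matI) (auto simp: cadj_def Qe Qm_dims)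
  moreover have "(\<Sum>i<m. \<Sum>j<m. cnj (v $ i) * Qm m k l t $$ (i,j) * v $ j) \<in> \<real> \<and>
        Re (\<Sum>i<m. \<Sum>j<m. cnj (v $ i) * Qm m k l t $$ (i,j) * v $ j) \<ge> 0" for v
  proof -
    define z where "z = (\<Sum>i<m. cnj (v $ i) * w i)"
    have cz: "cnj z = (\<Sum>j<m. cnj (w j) * v $ j)" by (simp add: z_def mult.commute)
    have "z * cnj z = (\<Sum>i<m. cnj (v $ i) * w i) * (\<Sum>j<m. cnj (w j) * v $ j)"
      using cz z_def by simp
    also have "\<dots> = (\<Sum>i<m. \<Sum>j<m. cnj (v $ i) * w i * (cnj (w j) * v $ j))"
      by (rule sum_product)
    also have "\<dots> = (\<Sum>i<m. \<Sum>j<m. cnj (v $ i) * Qm m k l t $$ (i,j) * v $ j)"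
      by (intro sum.cong refl) (simp add: Qe mult_ac)
    finally have "(\<Sum>i<m. \<Sum>j<m. cnj (v $ i) * Qm m k l t $$ (i,j) * v $ j) = z * cnj z" ..
    also have "\<dots> = complex_of_real ((cmod z)^2)" by (rule complex_norm_square[symmetric])
    finally show ?thesis by simp
  qed
  ultimately show ?thesis by (simp add: psd_def)
qed

lemma Eu_decomp:
  "Eu m k l = (1/4) \<cdot>\<^sub>m (Qm m k l 1 + ((-1) \<cdot>\<^sub>m Qm m k l (-1) + (\<i> \<cdot>\<^sub>m Qm m k l \<i> + (-\<i>) \<cdot>\<^sub>m Qm m k l (-\<i>))))"
  apply (rule eq_matI)
  subgoal for i j
    by (cases "i = k"; cases "i = l"; cases "j = k"; cases "j = l")
       (simp_all add: Eu_def Qm_def algebra_simps)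
  by (simp_all add: Eu_def Qm_def)

lemma span_zero:
  fixes g :: "complex mat \<Rightarrow> complex"
  assumes add: "\<And>A B. A \<in> carrier_mat m m \<Longrightarrow> B \<in> carrier_mat m m \<Longrightarrow> g (A + B) = g A + g B"
    and sc: "\<And>A c. A \<in> carrier_mat m m \<Longrightarrow> g (c \<cdot>\<^sub>m A) = c * g A"
    and Q: "\<And>k l t. k < m \<Longrightarrow> l < m \<Longrightarrow> t \<in> {1, -1, \<i>, -\<i>} \<Longrightarrow> g (Qm m k l t) = 0"
    and A: "A \<in> carrier_mat m m"
  shows "g A = 0"
proof -
  have E: "g (Eu m k l) = 0" if "k < m" "l < m" for k l
    unfolding Eu_decomp using that by (simp add: add sc Q)
  have Ec: "Eu m k l \<in> carrier_mat m m" for k l by (simp add: Eu_def)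
  define mask where "mask S = mat m m (\<lambda>(i,j). if (i,j) \<in> S then A $$ (i,j) else 0)" for S
  have mc: "mask S \<in> carrier_mat m m" for S by (simp add: mask_def)
  have "g (mask S) = 0" if "finite S" "S \<subseteq> {..<m} \<times> {..<m}" for S
    using that
  proof (induction S rule: finite_subset_induct)
    case empty
    have "mask {} = 0 \<cdot>\<^sub>m mask {}" by (rule eq_matI) (auto simp: mask_def)
    then show ?case using sc[OF mc, of 0 "{}"] by simp
  next
    case (insert x S)
    obtain a b where x: "x = (a,b)" by (cases x)
    have "mask (insert x S) = mask S + A $$ (a,b) \<cdot>\<^sub>m Eu m a b"
      using insert.hyps(3) x by (intro eq_matI) (auto simp: mask_def Eu_def)
    then show ?case using insert x E add sc mc Ec by auto
  qed
  moreover have "mask ({..<m} \<times> {..<m}) = A" using A by (intro eq_matI) (auto simp: mask_def)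
  ultimately show ?thesis by (metis finite_SigmaI finite_lessThan order_refl)
qed


lemma P1_lin: "\<psi> \<in> P1 m n \<Longrightarrow> lin_map m n \<psi>" by (simp add: P1_def)

lemma lin_carrier: "lin_map m n \<psi> \<Longrightarrow> A \<in> carrier_mat m m \<Longrightarrow> \<psi> A \<in> carrier_mat n n"
  by (simp add: lin_map_def)
lemma lin_add: "lin_map m n \<psi> \<Longrightarrow> A \<in> carrier_mat m m \<Longrightarrow> B \<in> carrier_mat m m \<Longrightarrow> \<psi> (A + B) = \<psi> A + \<psi> B"
  by (simp add: lin_map_def)
lemma lin_smult: "lin_map m n \<psi> \<Longrightarrow> A \<in> carrier_mat m m \<Longrightarrow> \<psi> (c \<cdot>\<^sub>m A) = c \<cdot>\<^sub>m \<psi> A"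
  by (simp add: lin_map_def)
lemma lin_out: "lin_map m n \<psi> \<Longrightarrow> A \<notin> carrier_mat m m \<Longrightarrow> \<psi> A = 0\<^sub>m n n"
  by (simp add: lin_map_def)

lemma lin_restr:
  assumes L: "lin_map m n \<psi>" and rn: "r \<le> n"
  shows "lin_map m r (restr m r \<psi>)"
  unfolding lin_map_def restr_def
  using L rn by (auto simp: lin_carrier lin_add lin_smult topleft_add[where n=n] topleft_smult[where n=n])

lemma restr_HP:
  assumes "\<psi> \<in> HP m n" and rn: "r \<le> n"
  shows "restr m r \<psi> \<in> HP m r"
proof -
  have L: "lin_map m n \<psi>" and H: "\<forall>A\<in>carrier_mat m m. \<psi> (cadj A) = cadj (\<psi> A)" using assms by (auto simp: HP_def)
  have "restr m r \<psi> (cadj A) = cadj (restr m r \<psi> A)" if A: "A \<in> carrier_mat m m" for A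
  proof -
    have "cadj A \<in> carrier_mat m m" using A by (simp add: cadj_def)
    then show ?thesis using A H L rn by (simp add: restr_def topleft_cadj[where n=n] lin_carrier)
  qed
  then show ?thesis using lin_restr[OF L rn] by (simp add: HP_def)
qed

lemma restr_P1:
  assumes "\<psi> \<in> P1 m n" and rn: "r \<le> n"
  shows "restr m r \<psi> \<in> P1 m r"
proof -
  have L: "lin_map m n \<psi>" and P: "\<forall>A. psd m A \<longrightarrow> psd n (\<psi> A)" using assms by (auto simp: P1_def)
  have "psd r (restr m r \<psi> A)" if A: "psd m A" for A
  proof -
    have "A \<in> carrier_mat m m" using A by (simp add: psd_def)
    moreover have "psd n (\<psi> A)" using P A by blast
    ultimately show ?thesis using rn by (simp add: restr_def psd_topleft)
  qed
  then show ?thesis using lin_restr[OF L rn] by (simp add: P1_def)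
qed

lemma restr_comb:
  assumes L1: "lin_map m n \<phi>" and L2: "lin_map m n \<psi>" and rn: "r \<le> n"
  shows "restr m r (map_comb a \<phi> b \<psi>) = map_comb a (restr m r \<phi>) b (restr m r \<psi>)"
proof
  fix A
  show "restr m r (map_comb a \<phi> b \<psi>) A = map_comb a (restr m r \<phi>) b (restr m r \<psi>) A"
  proof (cases "A \<in> carrier_mat m m")
    case True
    then have c1: "\<phi> A \<in> carrier_mat n n" and c2: "\<psi> A \<in> carrier_mat n n" using L1 L2 lin_carrier by auto
    then show ?thesis using True rn
      by (simp add: restr_def map_comb_def topleft_add[where n=n] topleft_smult[where n=n])
  next
    case False
    then show ?thesis by (simp add: restr_def map_comb_def)
  qed
qed

lemma corner_P1:
  assumes "\<phi> \<in> P1 m r" and rn: "r \<le> n"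
  shows "corner r n \<circ> \<phi> \<in> P1 m n"
proof -
  have L: "lin_map m r \<phi>" and P: "\<forall>A. psd m A \<longrightarrow> psd r (\<phi> A)" using assms by (auto simp: P1_def)
  have "lin_map m n (corner r n \<circ> \<phi>)"
    unfolding lin_map_def using L
    by (auto simp: lin_carrier lin_add lin_smult corner_add corner_smult lin_out corner_zero)
  moreover have "psd n ((corner r n \<circ> \<phi>) A)" if "psd m A" for A
    using P that psd_corner rn by simp
  ultimately show ?thesis by (simp add: P1_def)
qed

lemma smult_comm: "(a::complex) \<cdot>\<^sub>m (b \<cdot>\<^sub>m M) = b \<cdot>\<^sub>m (a \<cdot>\<^sub>m M)"
  by (rule eq_matI) (auto simp: mult_ac)

lemma smult_zero: "(a::complex) \<cdot>\<^sub>m 0\<^sub>m n n = 0\<^sub>m n n"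
  by (rule eq_matI) auto

lemma scale_P1:
  assumes "\<psi> \<in> P1 m n" and l: "l \<ge> 0"
  shows "(\<lambda>A. complex_of_real l \<cdot>\<^sub>m \<psi> A) \<in> P1 m n"
proof -
  have L: "lin_map m n \<psi>" and P: "\<forall>A. psd m A \<longrightarrow> psd n (\<psi> A)" using assms by (auto simp: P1_def)
  have "lin_map m n (\<lambda>A. complex_of_real l \<cdot>\<^sub>m \<psi> A)"
    unfolding lin_map_def using L
    by (auto simp: lin_carrier lin_add lin_smult lin_out add_smult_distrib_left_mat[where nr=n and nc=n] smult_comm smult_zero)
  moreover have "psd n (complex_of_real l \<cdot>\<^sub>m \<psi> A)" if "psd m A" for A
    using P that psd_smult l by simp
  ultimately show ?thesis by (simp add: P1_def)
qed

theorem proposition2p1: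
  fixes m n r :: nat and \<phi> :: "complex mat \<Rightarrow> complex mat"
  assumes "0 < m" and "0 < n" and "0 < r" and "r \<le> n"
    and "exposed_ray m r \<phi>"
  shows "exposed_ray m n (corner r n \<circ> \<phi>)"
proof -
  have rn: "r \<le> n" by fact
  from assms(5) obtain f where phiP: "\<phi> \<in> P1 m r" and nz: "\<phi> \<noteq> (\<lambda>A. 0\<^sub>m r r)"
    and flin: "real_lin_functional m r f" and fnn: "\<forall>\<psi>\<in>P1 m r. f \<psi> \<ge> 0"
    and fz: "{\<psi> \<in> P1 m r. f \<psi> = 0} = {(\<lambda>A. complex_of_real l \<cdot>\<^sub>m \<phi> A) | l. l \<ge> 0}"
    unfolding exposed_ray_def by blast
  have phil: "lin_map m r \<phi>" using phiP by (simp add: P1_def)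
  have cP: "corner r n \<circ> \<phi> \<in> P1 m n" by (rule corner_P1[OF phiP rn])
  have cnz: "corner r n \<circ> \<phi> \<noteq> (\<lambda>A. 0\<^sub>m n n)"
  proof
    assume h: "corner r n \<circ> \<phi> = (\<lambda>A. 0\<^sub>m n n)"
    have "\<phi> A = 0\<^sub>m r r" for A
    proof (cases "A \<in> carrier_mat m m")
      case True
      have c: "\<phi> A \<in> carrier_mat r r" using phil True lin_carrier by auto
      have "\<phi> A = topleft r (corner r n (\<phi> A))" using topleft_corner[OF c rn] by simp
      also have "\<dots> = topleft r (0\<^sub>m n n)" using fun_cong[OF h, of A] by simp
      also have "\<dots> = 0\<^sub>m r r" using rn by (intro eq_matI) auto
      finally show ?thesis .
    next
      case False then show ?thesis using phil lin_out by auto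
    qed
    then show False using nz by auto
  qed
  define Ts where "Ts = {1, -1, \<i>, -\<i> :: complex}"
  define F where "F = (\<lambda>\<psi>. f (restr m r \<psi>) +
     (\<Sum>k<m. \<Sum>l<m. \<Sum>t\<in>Ts. \<Sum>i\<in>{r..<n}. Re (\<psi> (Qm m k l t) $$ (i,i))))"
  have finTs: "finite Ts" by (simp add: Ts_def)
  have Flin: "real_lin_functional m n F"
    unfolding real_lin_functional_def
  proof (intro ballI allI)
    fix \<phi>' \<psi>' a b assume h1: "\<phi>' \<in> HP m n" and h2: "\<psi>' \<in> HP m n"
    have L1: "lin_map m n \<phi>'" and L2: "lin_map m n \<psi>'" using h1 h2 by (auto simp: HP_def)
    have f1: "f (restr m r (map_comb a \<phi>' b \<psi>')) = a * f (restr m r \<phi>') + b * f (restr m r \<psi>')"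
      unfolding restr_comb[OF L1 L2 rn]
      using flin restr_HP[OF h1 rn] restr_HP[OF h2 rn] unfolding real_lin_functional_def by blast
    have e: "Re (map_comb a \<phi>' b \<psi>' (Qm m k l t) $$ (i,i)) = a * Re (\<phi>' (Qm m k l t) $$ (i,i)) + b * Re (\<psi>' (Qm m k l t) $$ (i,i))"
      if "i \<in> {r..<n}" for k l t i
    proof -
      have "\<phi>' (Qm m k l t) \<in> carrier_mat n n" "\<psi>' (Qm m k l t) \<in> carrier_mat n n"
        using L1 L2 lin_carrier by auto
      then show ?thesis using that by (simp add: map_comb_def)
    qed
    show "F (map_comb a \<phi>' b \<psi>') = a * F \<phi>' + b * F \<psi>'"
      unfolding F_def f1 by (simp add: e sum.distrib sum_distrib_left algebra_simps)
  qed
  have Tnn: "Re (\<psi> (Qm m k l t) $$ (i,i)) \<ge> 0" "\<psi> (Qm m k l t) $$ (i,i) \<in> \<real>"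
    if "\<psi> \<in> P1 m n" "k < m" "l < m" "i < n" for \<psi> k l t i
  proof -
    have "psd n (\<psi> (Qm m k l t))" using that Qm_psd by (simp add: P1_def)
    then show "Re (\<psi> (Qm m k l t) $$ (i,i)) \<ge> 0" "\<psi> (Qm m k l t) $$ (i,i) \<in> \<real>"
      using psd_diag that by auto
  qed
  have Snn: "(\<Sum>k<m. \<Sum>l<m. \<Sum>t\<in>Ts. \<Sum>i\<in>{r..<n}. Re (\<psi> (Qm m k l t) $$ (i,i))) \<ge> 0"
    if "\<psi> \<in> P1 m n" for \<psi>
    using that Tnn by (intro sum_nonneg) auto
  have Fnn: "\<forall>\<psi>\<in>P1 m n. F \<psi> \<ge> 0"
  proof
    fix \<psi> assume h: "\<psi> \<in> P1 m n"
    show "F \<psi> \<ge> 0" unfolding F_def using fnn restr_P1[OF h rn] Snn[OF h] by force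
  qed
  have sub1: "{\<psi> \<in> P1 m n. F \<psi> = 0} \<subseteq> {(\<lambda>A. complex_of_real l \<cdot>\<^sub>m (corner r n \<circ> \<phi>) A) | l. l \<ge> 0}"
  proof
    fix \<psi> assume "\<psi> \<in> {\<psi> \<in> P1 m n. F \<psi> = 0}"
    then have \<psi>P: "\<psi> \<in> P1 m n" and F0: "F \<psi> = 0" by auto
    have L: "lin_map m n \<psi>" using \<psi>P by (simp add: P1_def)
    have rP: "restr m r \<psi> \<in> P1 m r" by (rule restr_P1[OF \<psi>P rn])
    have fr: "f (restr m r \<psi>) \<ge> 0" using fnn rP by blast
    have S0: "(\<Sum>k<m. \<Sum>l<m. \<Sum>t\<in>Ts. \<Sum>i\<in>{r..<n}. Re (\<psi> (Qm m k l t) $$ (i,i))) = 0"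
      and f0: "f (restr m r \<psi>) = 0" using F0 fr Snn[OF \<psi>P] unfolding F_def by linarith+
    have T0: "\<psi> (Qm m k l t) $$ (i,i) = 0" if kl: "k < m" "l < m" "t \<in> Ts" "r \<le> i" "i < n" for k l t i
    proof -
      have "Re (\<psi> (Qm m k l t) $$ (i,i)) \<le> (\<Sum>i\<in>{r..<n}. Re (\<psi> (Qm m k l t) $$ (i,i)))"
        using kl Tnn[OF \<psi>P] by (intro member_le_sum) auto
      also have "\<dots> \<le> (\<Sum>t\<in>Ts. \<Sum>i\<in>{r..<n}. Re (\<psi> (Qm m k l t) $$ (i,i)))"
        using kl Tnn[OF \<psi>P] finTs by (intro member_le_sum sum_nonneg) auto
      also have "\<dots> \<le> (\<Sum>l<m. \<Sum>t\<in>Ts. \<Sum>i\<in>{r..<n}. Re (\<psi> (Qm m k l t) $$ (i,i)))"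
        using kl Tnn[OF \<psi>P] by (intro member_le_sum sum_nonneg) auto
      also have "\<dots> \<le> (\<Sum>k<m. \<Sum>l<m. \<Sum>t\<in>Ts. \<Sum>i\<in>{r..<n}. Re (\<psi> (Qm m k l t) $$ (i,i)))"
        using kl Tnn[OF \<psi>P] by (intro member_le_sum sum_nonneg) auto
      finally have "Re (\<psi> (Qm m k l t) $$ (i,i)) = 0" using S0 Tnn(1)[OF \<psi>P kl(1,2) kl(5), where t=t] by linarith
      moreover have "Im (\<psi> (Qm m k l t) $$ (i,i)) = 0"
        using Tnn(2)[OF \<psi>P kl(1,2) kl(5), where t=t] complex_is_Real_iff by blast
      ultimately show ?thesis by (simp add: complex_eq_iff)
    qed
    have Qz: "\<psi> (Qm m k l t) $$ (i,j) = 0"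
      if kl: "k < m" "l < m" "t \<in> Ts" "i < n" "j < n" "\<not> (i < r \<and> j < r)" for k l t i j
    proof -
      have Pq: "psd n (\<psi> (Qm m k l t))" using \<psi>P kl Qm_psd by (simp add: P1_def)
      show ?thesis
      proof (cases "r \<le> i")
        case True
        then show ?thesis using psd_zero_row[OF Pq kl(4,5)] T0 kl by auto
      next
        case False
        then have "r \<le> j" using kl by auto
        then have "\<psi> (Qm m k l t) $$ (j,i) = 0" using psd_zero_row[OF Pq kl(5,4)] T0 kl by auto
        then show ?thesis using psd_herm[OF Pq kl(5,4)] by simp
      qed
    qed
    have Az: "\<psi> A $$ (i,j) = 0"
      if A: "A \<in> carrier_mat m m" and ij: "i < n" "j < n" "\<not> (i < r \<and> j < r)" for A i j
    proof (rule span_zero[where g = "\<lambda>B. \<psi> B $$ (i,j)" and m = m, OF _ _ _ A])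
      fix B C :: "complex mat" assume B: "B \<in> carrier_mat m m" and C: "C \<in> carrier_mat m m"
      show "\<psi> (B + C) $$ (i,j) = \<psi> B $$ (i,j) + \<psi> C $$ (i,j)"
        using lin_add[OF L B C] lin_carrier[OF L B] lin_carrier[OF L C] ij by simp
    next
      fix B :: "complex mat" and c :: complex assume B: "B \<in> carrier_mat m m"
      show "\<psi> (c \<cdot>\<^sub>m B) $$ (i,j) = c * \<psi> B $$ (i,j)"
        using lin_smult[OF L B] lin_carrier[OF L B] ij by simp
    next
      fix k l t assume "k < m" "l < m" "t \<in> {1, -1, \<i>, -\<i>}"
      then show "\<psi> (Qm m k l t) $$ (i,j) = 0" using Qz ij unfolding Ts_def by blast
    qed
    have "restr m r \<psi> \<in> {\<psi> \<in> P1 m r. f \<psi> = 0}" using rP f0 by blast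
    then obtain c where c: "c \<ge> 0" and rc: "restr m r \<psi> = (\<lambda>A. complex_of_real c \<cdot>\<^sub>m \<phi> A)"
      unfolding fz by blast
    have "\<psi> = (\<lambda>A. complex_of_real c \<cdot>\<^sub>m (corner r n \<circ> \<phi>) A)"
    proof
      fix A
      show "\<psi> A = complex_of_real c \<cdot>\<^sub>m (corner r n \<circ> \<phi>) A"
      proof (cases "A \<in> carrier_mat m m")
        case True
        have c1: "\<psi> A \<in> carrier_mat n n" using L True lin_carrier by auto
        have c2: "\<phi> A \<in> carrier_mat r r" using phil True lin_carrier by auto
        have "\<psi> A = corner r n (topleft r (\<psi> A))"
          using c1 Az[OF True] by (intro eq_matI) auto
        also have "topleft r (\<psi> A) = complex_of_real c \<cdot>\<^sub>m \<phi> A"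
          using fun_cong[OF rc, of A] True by (simp add: restr_def)
        finally show ?thesis using c2 by (simp add: corner_smult)
      next
        case False
        then show ?thesis using lin_out[OF L False] lin_out[OF phil False] by (simp add: corner_zero smult_zero)
      qed
    qed
    then show "\<psi> \<in> {(\<lambda>A. complex_of_real l \<cdot>\<^sub>m (corner r n \<circ> \<phi>) A) | l. l \<ge> 0}" using c by blast
  qed
  have sub2: "{(\<lambda>A. complex_of_real l \<cdot>\<^sub>m (corner r n \<circ> \<phi>) A) | l. l \<ge> 0} \<subseteq> {\<psi> \<in> P1 m n. F \<psi> = 0}"
  proof
    fix \<psi> assume "\<psi> \<in> {(\<lambda>A. complex_of_real l \<cdot>\<^sub>m (corner r n \<circ> \<phi>) A) | l. l \<ge> 0}"
    then obtain c where c: "c \<ge> 0" and \<psi>: "\<psi> = (\<lambda>A. complex_of_real c \<cdot>\<^sub>m (corner r n \<circ> \<phi>) A)" by blast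
    have \<psi>P: "\<psi> \<in> P1 m n" unfolding \<psi> by (rule scale_P1[OF cP c])
    have rr: "restr m r \<psi> = (\<lambda>A. complex_of_real c \<cdot>\<^sub>m \<phi> A)"
    proof
      fix A
      show "restr m r \<psi> A = complex_of_real c \<cdot>\<^sub>m \<phi> A"
      proof (cases "A \<in> carrier_mat m m")
        case True
        have c2: "\<phi> A \<in> carrier_mat r r" using phil True lin_carrier by auto
        show ?thesis using True c2 rn
          by (simp add: restr_def \<psi> corner_smult[symmetric] topleft_corner smult_carrier_mat)
      next
        case False
        then show ?thesis using lin_out[OF phil False] False by (simp add: restr_def smult_zero)
      qed
    qed
    have "(\<lambda>A. complex_of_real c \<cdot>\<^sub>m \<phi> A) \<in> {\<psi> \<in> P1 m r. f \<psi> = 0}"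
      unfolding fz using c by blast
    then have f0: "f (restr m r \<psi>) = 0" unfolding rr by blast
    have d0: "Re (\<psi> (Qm m k l t) $$ (i,i)) = 0" if "i \<in> {r..<n}" for k l t i
      using that by (simp add: \<psi>)
    have "F \<psi> = 0" unfolding F_def f0 by (simp add: d0)
    then show "\<psi> \<in> {\<psi> \<in> P1 m n. F \<psi> = 0}" using \<psi>P by blast
  qed
  show ?thesis unfolding exposed_ray_def
    using cP cnz Flin Fnn sub1 sub2 by blast
qed

end
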